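(* Let $G$ be a simple graph with $\min\{\delta(G),\delta(G^c)\}\ge4$ and $|V(G)|\ge 26$. If $G$ has an edge-cut of size at most $3$, then $G^c\in\mathcal{S}_3$.
   Context: $G^c$ is the complement of $G$. $G\in\mathcal{S}_3$ means: for every $\beta:V(G)\to\mathbb{Z}_3$ with $\sum_v\beta(v)\equiv0\pmod3$ there is a strongly-connected orientation $D$ of $G$ with $d^+_D(v)-d^-_D(v)\equiv\beta(v)\pmod3$ for all $v$. *)

theory Defs
  imports Main
begin

definition simple_graph :: "'a set \<Rightarrow> ('a \<Rightarrow> 'a \<Rightarrow> bool) \<Rightarrow> bool" where
  "simple_graph V E \<longleftrightarrow> finite V \<and>
     (\<forall>u v. E u v \<longrightarrow> u \<in> V \<and> v \<in> V \<and> u \<noteq> v \<and> E v u)"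

definition compl_graph :: "'a set \<Rightarrow> ('a \<Rightarrow> 'a \<Rightarrow> bool) \<Rightarrow> ('a \<Rightarrow> 'a \<Rightarrow> bool)" where
  "compl_graph V E = (\<lambda>u v. u \<in> V \<and> v \<in> V \<and> u \<noteq> v \<and> \<not> E u v)"

definition degree :: "'a set \<Rightarrow> ('a \<Rightarrow> 'a \<Rightarrow> bool) \<Rightarrow> 'a \<Rightarrow> nat" where
  "degree V E v = card {w \<in> V. E v w}"

definition min_degree :: "'a set \<Rightarrow> ('a \<Rightarrow> 'a \<Rightarrow> bool) \<Rightarrow> nat" where
  "min_degree V E = Min (degree V E ` V)"

definition cut_edges :: "'a set \<Rightarrow> ('a \<Rightarrow> 'a \<Rightarrow> bool) \<Rightarrow> 'a set \<Rightarrow> ('a \<times> 'a) set" where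
  "cut_edges V E X = {(u, v). u \<in> X \<and> v \<in> V - X \<and> E u v}"

definition has_edge_cut_at_most :: "'a set \<Rightarrow> ('a \<Rightarrow> 'a \<Rightarrow> bool) \<Rightarrow> nat \<Rightarrow> bool" where
  "has_edge_cut_at_most V E k \<longleftrightarrow>
     (\<exists>X. X \<noteq> {} \<and> X \<subset> V \<and> card (cut_edges V E X) \<le> k)"

definition orientation :: "('a \<Rightarrow> 'a \<Rightarrow> bool) \<Rightarrow> ('a \<Rightarrow> 'a \<Rightarrow> bool) \<Rightarrow> bool" where
  "orientation E D \<longleftrightarrow> (\<forall>u v. D u v \<longrightarrow> E u v) \<and> (\<forall>u v. E u v \<longrightarrow> (D u v \<noteq> D v u))"

definition strongly_connected :: "'a set \<Rightarrow> ('a \<Rightarrow> 'a \<Rightarrow> bool) \<Rightarrow> bool" where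
  "strongly_connected V D \<longleftrightarrow> (\<forall>u\<in>V. \<forall>v\<in>V. (u, v) \<in> {(x, y). D x y}\<^sup>*)"

definition out_degree :: "'a set \<Rightarrow> ('a \<Rightarrow> 'a \<Rightarrow> bool) \<Rightarrow> 'a \<Rightarrow> nat" where
  "out_degree V D v = card {w \<in> V. D v w}"

definition in_degree :: "'a set \<Rightarrow> ('a \<Rightarrow> 'a \<Rightarrow> bool) \<Rightarrow> 'a \<Rightarrow> nat" where
  "in_degree V D v = card {w \<in> V. D w v}"

text \<open>G in S_3: every Z_3-boundary beta (represented by integers, read mod 3)
  is realised mod 3 by a strongly connected orientation.\<close>
definition in_S3 :: "'a set \<Rightarrow> ('a \<Rightarrow> 'a \<Rightarrow> bool) \<Rightarrow> bool" where
  "in_S3 V E \<longleftrightarrow> (\<forall>\<beta> :: 'a \<Rightarrow> int. (\<Sum>v\<in>V. \<beta> v) mod 3 = 0 \<longrightarrow>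
     (\<exists>D. orientation E D \<and> strongly_connected V D \<and>
        (\<forall>v\<in>V. (int (out_degree V D v) - int (in_degree V D v)) mod 3 = \<beta> v mod 3)))"

end

theory Submission
  imports Defs
begin


lemma add_edge:
  assumes S: "in_S3 W E" and fin: "finite W"
    and EW: "\<forall>u v. E u v \<longrightarrow> u \<in> W \<and> v \<in> W"
    and a: "a\<in>W" "b\<in>W" "a\<noteq>b" and nab: "\<not>E a b" "\<not>E b a"
  shows "in_S3 W (\<lambda>u v. E u v \<or> (u=a \<and> v=b) \<or> (u=b \<and> v=a))"
  unfolding in_S3_def
proof (intro allI impI)
  fix \<beta> :: "'a \<Rightarrow> int" assume sum: "(\<Sum>v\<in>W. \<beta> v) mod 3 = 0"
  define \<beta>' where "\<beta>' = (\<lambda>x. \<beta> x - (if x = a then 1 else 0) + (if x = b then 1 else 0))"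
  have "(\<Sum>v\<in>W. \<beta>' v) = (\<Sum>v\<in>W. \<beta> v) - (\<Sum>v\<in>W. (if v = a then 1 else 0)) + (\<Sum>v\<in>W. (if v = b then 1 else 0))"
    unfolding \<beta>'_def by (simp add: sum.distrib sum_subtractf)
  also have "\<dots> = (\<Sum>v\<in>W. \<beta> v)" using a fin by simp
  finally have "(\<Sum>v\<in>W. \<beta>' v) mod 3 = 0" using sum by simp
  then obtain D where D: "orientation E D" "strongly_connected W D"
    "\<forall>v\<in>W. (int (out_degree W D v) - int (in_degree W D v)) mod 3 = \<beta>' v mod 3"
    using S[unfolded in_S3_def, rule_format, OF \<open>(\<Sum>v\<in>W. \<beta>' v) mod 3 = 0\<close>] by blast
  define D' where "D' = (\<lambda>u v. D u v \<or> (u=a \<and> v=b))"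
  have Dab: "\<not> D a b" "\<not> D b a" using D(1) nab unfolding orientation_def by auto
  have "orientation (\<lambda>u v. E u v \<or> (u=a \<and> v=b) \<or> (u=b \<and> v=a)) D'"
  proof -
    have o1: "\<forall>u v. D u v \<longrightarrow> E u v" and o2: "\<forall>u v. E u v \<longrightarrow> D u v \<noteq> D v u"
      using D(1) unfolding orientation_def by auto
    show ?thesis unfolding orientation_def
    proof (intro conjI allI impI)
      fix u v assume "D' u v" then show "E u v \<or> (u=a \<and> v=b) \<or> (u=b \<and> v=a)"
        using o1 unfolding D'_def by blast
    next
      fix u v assume h: "E u v \<or> (u=a \<and> v=b) \<or> (u=b \<and> v=a)"
      show "D' u v \<noteq> D' v u"
      proof (cases "E u v")
        case True
        then have "(u,v) \<noteq> (a,b)" "(u,v) \<noteq> (b,a)" using nab by auto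
        then show ?thesis using o2 True unfolding D'_def by auto
      next
        case False
        then show ?thesis using h Dab a(3) unfolding D'_def by auto
      qed
    qed
  qed
  moreover have "strongly_connected W D'"
  proof -
    have "{(x,y). D x y} \<subseteq> {(x,y). D' x y}" unfolding D'_def by auto
    then show ?thesis using D(2) rtrancl_mono unfolding strongly_connected_def by blast
  qed
  moreover have "\<forall>v\<in>W. (int (out_degree W D' v) - int (in_degree W D' v)) mod 3 = \<beta> v mod 3"
  proof
    fix x assume x: "x \<in> W"
    have o: "out_degree W D' x = out_degree W D x + (if x = a then 1 else 0)"
    proof (cases "x = a")
      case True
      have "{w\<in>W. D' x w} = insert b {w\<in>W. D x w}" using True a unfolding D'_def by auto
      then show ?thesis using True Dab fin unfolding out_degree_def by simp
    next
      case False
      have "{w\<in>W. D' x w} = {w\<in>W. D x w}" using False unfolding D'_def by auto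
      then show ?thesis using False unfolding out_degree_def by simp
    qed
    have i: "in_degree W D' x = in_degree W D x + (if x = b then 1 else 0)"
    proof (cases "x = b")
      case True
      have "{w\<in>W. D' w x} = insert a {w\<in>W. D w x}" using True a unfolding D'_def by auto
      then show ?thesis using True Dab fin unfolding in_degree_def by simp
    next
      case False
      have "{w\<in>W. D' w x} = {w\<in>W. D w x}" using False unfolding D'_def by auto
      then show ?thesis using False unfolding in_degree_def by simp
    qed
    have "(int (out_degree W D x) - int (in_degree W D x)) mod 3 = \<beta>' x mod 3" using D(3) x by blast
    then show "(int (out_degree W D' x) - int (in_degree W D' x)) mod 3 = \<beta> x mod 3"
      using o i a unfolding \<beta>'_def by (auto simp: mod_eq_dvd_iff algebra_simps)
  qed
  ultimately show "\<exists>D. orientation (\<lambda>u v. E u v \<or> (u=a \<and> v=b) \<or> (u=b \<and> v=a)) D \<and> strongly_connected W D \<and>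
        (\<forall>v\<in>W. (int (out_degree W D v) - int (in_degree W D v)) mod 3 = \<beta> v mod 3)" by blast
qed


lemma mono_S3_aux:
  assumes fin: "finite W" and E2: "\<forall>u v. E2 u v \<longrightarrow> u\<in>W \<and> v\<in>W \<and> u\<noteq>v \<and> E2 v u"
  shows "\<forall>E1. card {(u,v). E2 u v \<and> \<not> E1 u v} = n \<longrightarrow> (\<forall>u v. E1 u v \<longrightarrow> E1 v u) \<longrightarrow>
     (\<forall>u v. E1 u v \<longrightarrow> E2 u v) \<longrightarrow> in_S3 W E1 \<longrightarrow> in_S3 W E2"
proof (induction n rule: less_induct)
  case (less n)
  show ?case
  proof (intro allI impI)
    fix E1 assume n: "card {(u,v). E2 u v \<and> \<not> E1 u v} = n" and sym: "\<forall>u v. E1 u v \<longrightarrow> E1 v u"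
      and sub: "\<forall>u v. E1 u v \<longrightarrow> E2 u v" and S: "in_S3 W E1"
    have finD: "finite {(u,v). E2 u v \<and> \<not> E1 u v}"
      by (rule finite_subset[of _ "W \<times> W"]) (use E2 fin in auto)
    show "in_S3 W E2"
    proof (cases "{(u,v). E2 u v \<and> \<not> E1 u v} = {}")
      case True
      then have "E1 = E2" using sub by (auto intro!: ext)
      then show ?thesis using S by simp
    next
      case False
      then obtain a b where ab: "E2 a b" "\<not> E1 a b" by auto
      then have ba: "E2 b a" "\<not> E1 b a" using E2 sym by auto
      define E1' where "E1' = (\<lambda>u v. E1 u v \<or> (u=a \<and> v=b) \<or> (u=b \<and> v=a))"
      have S': "in_S3 W E1'" unfolding E1'_def
        by (rule add_edge[OF S fin]) (use E2 sub ab ba in auto)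
      have eq: "{(u,v). E2 u v \<and> \<not> E1' u v} = {(u,v). E2 u v \<and> \<not> E1 u v} - {(a,b)}  - {(b,a)}"
        unfolding E1'_def by auto
      have "card {(u,v). E2 u v \<and> \<not> E1' u v} < n"
        unfolding eq n[symmetric] using ab finD
        by (metis (no_types, lifting) Diff_subset card_Diff1_less case_prodI dual_order.strict_trans2
            finite_Diff card_mono mem_Collect_eq)
      moreover have "\<forall>u v. E1' u v \<longrightarrow> E1' v u" using sym unfolding E1'_def by auto
      moreover have "\<forall>u v. E1' u v \<longrightarrow> E2 u v" using sub ab ba unfolding E1'_def by auto
      ultimately show ?thesis using less.IH S' by blast
    qed
  qed
qed

lemma mono_S3:
  assumes "finite W" "\<forall>u v. E2 u v \<longrightarrow> u\<in>W \<and> v\<in>W \<and> u\<noteq>v \<and> E2 v u"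
    "\<forall>u v. E1 u v \<longrightarrow> E1 v u" "\<forall>u v. E1 u v \<longrightarrow> E2 u v" "in_S3 W E1"
  shows "in_S3 W E2"
  using mono_S3_aux[OF assms(1,2)] assms(3-5) by blast


definition Er :: "'a set \<Rightarrow> ('a \<Rightarrow> 'a \<Rightarrow> bool) \<Rightarrow> 'a \<Rightarrow> 'a \<Rightarrow> bool" where
  "Er W E u v \<longleftrightarrow> E u v \<and> u \<in> W \<and> v \<in> W"

lemma grow:
  assumes fin: "finite W" and sym: "\<forall>u v. Ec u v \<longrightarrow> Ec v u" and irr: "\<forall>u. \<not> Ec u u"
    and S: "in_S3 W (Er W Ec)" and vW: "v \<notin> W" and deg: "card {w\<in>W. Ec v w} \<ge> 4"
  shows "in_S3 (insert v W) (Er (insert v W) Ec)"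
  unfolding in_S3_def
proof (intro allI impI)
  fix \<beta> :: "'a \<Rightarrow> int" assume sum: "(\<Sum>x\<in>insert v W. \<beta> x) mod 3 = 0"
  define N where "N = {w\<in>W. Ec v w}"
  define k where "k = card N"
  have finN: "finite N" using fin unfolding N_def by auto
  have k4: "k \<ge> 4" using deg unfolding k_def N_def by simp
  have "\<exists>m::int. 1 \<le> m \<and> m \<le> 3 \<and> (2*m - K) mod 3 = B mod 3" for K B by presburger
  then obtain m :: int where m: "1 \<le> m" "m \<le> 3" "(2*m - int k) mod 3 = \<beta> v mod 3" by blast
  obtain Os where Os: "Os \<subseteq> N" "card Os = nat m"
    using obtain_subset_with_card_n[of "nat m" N] m k4 unfolding k_def by force
  have finO: "finite Os" using Os finN finite_subset by blast
  have cNO: "card (N - Os) = k - nat m" using Os finO unfolding k_def by (simp add: card_Diff_subset)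
  have Onz: "Os \<noteq> {}" using Os m by auto
  have "card (N - Os) > 0" using cNO m k4 by (simp add: nat_le_iff)
  then have NOne: "N - Os \<noteq> {}" by (metis card.empty less_irrefl)
  define \<beta>' where "\<beta>' = (\<lambda>x. \<beta> x + (if x \<in> Os then 1 else 0) - (if x \<in> N - Os then 1 else 0))"
  have "(\<Sum>x\<in>W. \<beta>' x) = (\<Sum>x\<in>W. \<beta> x) + (\<Sum>x\<in>W. if x \<in> Os then 1 else 0) - (\<Sum>x\<in>W. if x \<in> N - Os then 1 else 0)"
    unfolding \<beta>'_def by (simp add: sum.distrib sum_subtractf)
  also have "(\<Sum>x\<in>W. if x \<in> Os then 1 else 0) = int (card Os)"
  proof -
    have "Os = {x\<in>W. x \<in> Os}" using Os unfolding N_def by auto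
    then show ?thesis using fin by (simp add: sum.inter_filter[symmetric])
  qed
  also have "(\<Sum>x\<in>W. if x \<in> N - Os then 1 else 0) = int (card (N - Os))"
  proof -
    have "N - Os = {x\<in>W. x \<in> N - Os}" unfolding N_def by auto
    then show ?thesis using fin by (simp add: sum.inter_filter[symmetric])
  qed
  finally have s1: "(\<Sum>x\<in>W. \<beta>' x) = (\<Sum>x\<in>W. \<beta> x) + m - (int k - m)"
    using Os cNO m k4 by simp
  have s2: "(\<Sum>x\<in>insert v W. \<beta> x) = \<beta> v + (\<Sum>x\<in>W. \<beta> x)" using fin vW by simp
  have s3: "(\<Sum>x\<in>W. \<beta>' x) mod 3 = 0"
    using sum m(3) unfolding s1 s2 by (simp add: mod_eq_dvd_iff) presburger
  then obtain D where D: "orientation (Er W Ec) D" "strongly_connected W D"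
    "\<forall>x\<in>W. (int (out_degree W D x) - int (in_degree W D x)) mod 3 = \<beta>' x mod 3"
    using S[unfolded in_S3_def, rule_format, OF s3] by blast
  have DW: "D x y \<Longrightarrow> x \<in> W \<and> y \<in> W \<and> Ec x y" for x y using D(1) unfolding orientation_def Er_def by blast
  have D2: "Er W Ec x y \<Longrightarrow> D x y \<noteq> D y x" for x y using D(1) unfolding orientation_def by blast
  define D' where "D' = (\<lambda>x y. D x y \<or> (x = v \<and> y \<in> Os) \<or> (x \<in> N - Os \<and> y = v))"
  have vN: "v \<notin> N" using vW unfolding N_def by auto
  have "orientation (Er (insert v W) Ec) D'"
    unfolding orientation_def
  proof (intro conjI allI impI)
    fix x y assume "D' x y" then show "Er (insert v W) Ec x y"
      unfolding D'_def Er_def using DW Os sym unfolding N_def by auto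
  next
    fix x y assume h: "Er (insert v W) Ec x y"
    show "D' x y \<noteq> D' y x"
    proof (cases "x = v")
      case True
      then have "y \<noteq> v" using h irr unfolding Er_def by auto
      then have "y \<in> N" using h True unfolding Er_def N_def by auto
      then show ?thesis using True DW vW vN Os unfolding D'_def by auto
    next
      case False
      show ?thesis
      proof (cases "y = v")
        case True
        then have "x \<in> N" using h False sym unfolding Er_def N_def by auto
        then show ?thesis using True DW vW vN Os unfolding D'_def by auto
      next
        case False2: False
        then have "Er W Ec x y" using h False unfolding Er_def by auto
        then show ?thesis using D2[of x y] False False2 unfolding D'_def by auto
      qed
    qed
  qed
  moreover have "strongly_connected (insert v W) D'"
  proof -
    let ?R = "{(x,y). D x y}" let ?R' = "{(x,y). D' x y}"
    have sub: "?R \<subseteq> ?R'" unfolding D'_def by auto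
    have inW: "x \<in> W \<Longrightarrow> y \<in> W \<Longrightarrow> (x,y) \<in> ?R'\<^sup>*" for x y
      using D(2) rtrancl_mono[OF sub] unfolding strongly_connected_def by blast
    obtain oo where oo: "oo \<in> Os" using Onz by auto
    obtain p where p: "p \<in> N - Os" using NOne by auto
    have oW: "oo \<in> W" "p \<in> W" using oo p Os unfolding N_def by auto
    have vo: "(v, oo) \<in> ?R'" using oo unfolding D'_def by auto
    have pv: "(p, v) \<in> ?R'" using p unfolding D'_def by auto
    show ?thesis unfolding strongly_connected_def
    proof (intro ballI)
      fix x y assume x: "x \<in> insert v W" and y: "y \<in> insert v W"
      show "(x, y) \<in> ?R'\<^sup>*"
      proof (cases "x = v")
        case True
        show ?thesis
        proof (cases "y = v")
          case True2: True then show ?thesis using True by simp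
        next
          case False then have "y \<in> W" using y by auto
          then show ?thesis using True vo inW[OF oW(1)] by (meson converse_rtrancl_into_rtrancl)
        qed
      next
        case False then have xW: "x \<in> W" using x by auto
        show ?thesis
        proof (cases "y = v")
          case True then show ?thesis using pv inW[OF xW oW(2)] by (meson rtrancl_into_rtrancl)
        next
          case False then show ?thesis using inW[OF xW] y by auto
        qed
      qed
    qed
  qed
  moreover have "\<forall>x\<in>insert v W. (int (out_degree (insert v W) D' x) - int (in_degree (insert v W) D' x)) mod 3 = \<beta> x mod 3"
  proof
    fix x assume x: "x \<in> insert v W"
    show "(int (out_degree (insert v W) D' x) - int (in_degree (insert v W) D' x)) mod 3 = \<beta> x mod 3"
    proof (cases "x = v")
      case True
      have "{w\<in>insert v W. D' x w} = Os" using True DW vW Os unfolding D'_def N_def by auto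
      moreover have "{w\<in>insert v W. D' w x} = N - Os" using True DW vW vN Os unfolding D'_def N_def by auto
      ultimately show ?thesis using True Os cNO m k4 unfolding out_degree_def in_degree_def
        by (simp add: of_nat_diff)
    next
      case False
      then have xW: "x \<in> W" using x by auto
      have "{w\<in>insert v W. D' x w} = {w\<in>W. D x w} \<union> (if x \<in> N - Os then {v} else {})"
        using False DW vW unfolding D'_def by auto
      then have oo: "out_degree (insert v W) D' x = out_degree W D x + (if x \<in> N - Os then 1 else 0)"
        unfolding out_degree_def using fin vW by auto
      have "{w\<in>insert v W. D' w x} = {w\<in>W. D w x} \<union> (if x \<in> Os then {v} else {})"
        using False DW vW vN unfolding D'_def by auto
      then have i: "in_degree (insert v W) D' x = in_degree W D x + (if x \<in> Os then 1 else 0)"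
        unfolding in_degree_def using fin vW by auto
      have "(int (out_degree W D x) - int (in_degree W D x)) mod 3 = \<beta>' x mod 3" using D(3) xW by blast
      then show ?thesis using oo i unfolding \<beta>'_def by (auto simp: mod_eq_dvd_iff algebra_simps)
    qed
  qed
  ultimately show "\<exists>D. orientation (Er (insert v W) Ec) D \<and> strongly_connected (insert v W) D \<and>
    (\<forall>x\<in>insert v W. (int (out_degree (insert v W) D x) - int (in_degree (insert v W) D x)) mod 3 = \<beta> x mod 3)"
    by blast
qed


definition cyc :: "nat \<Rightarrow> nat \<Rightarrow> nat set" where
  "cyc j k = (if k = 1 then {(j+1) mod 5} else if k = 2 then {(j+1) mod 5, (j+2) mod 5}
     else {(j+1) mod 5, (j+2) mod 5, (j+3) mod 5})"

definition fb :: "nat \<Rightarrow> nat \<Rightarrow> nat set" where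
  "fb c k = insert 4 (if k = 1 then {} else if k = 2 then {(c+1) mod 4} else {(c+1) mod 4, (c+2) mod 4})"

lemma lt5_cases: "(j::nat) < 5 \<Longrightarrow> j = 0 \<or> j = 1 \<or> j = 2 \<or> j = 3 \<or> j = 4" by auto
lemma lt4_cases: "(j::nat) < 4 \<Longrightarrow> j = 0 \<or> j = 1 \<or> j = 2 \<or> j = 3" by auto
lemma k_cases: "(k::nat) \<in> {1,2,3} \<Longrightarrow> k = 1 \<or> k = 2 \<or> k = 3" by auto

lemma cyc_props:
  assumes "j < 5" "k \<in> {1,2,3}"
  shows "cyc j k \<subseteq> {..<5}" "card (cyc j k) = k" "(j+1) mod 5 \<in> cyc j k" "j \<notin> cyc j k"
  using lt5_cases[OF assms(1)] k_cases[OF assms(2)] unfolding cyc_def by auto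

lemma fb_props:
  assumes "c < 4" "k \<in> {1,2,3}"
  shows "fb c k \<subseteq> {..<5}" "card (fb c k) = k" "4 \<in> fb c k" "c \<notin> fb c k"
    "card (insert c (fb c k - {4})) = k" "insert c (fb c k - {4}) \<subseteq> {..<5}"
  using lt4_cases[OF assms(1)] k_cases[OF assms(2)] unfolding fb_def by auto


lemma card_ind: "finite A \<Longrightarrow> int (card {j\<in>A. P j}) = (\<Sum>j\<in>A. if P j then 1 else 0)"
  by (simp add: sum.inter_filter[symmetric])

lemma arith4:
  fixes r4 a0 a1 a2 a3 a4 d0 d1 d2 d3 b0 b1 b2 b3 b4 C :: int
  assumes "r4 = a4 - (d0+d1+d2+d3)" "d0 = (b0+2-a0) mod 3" "d1 = (b1+2-a1) mod 3"
    "d2 = (b2+2-a2) mod 3" "d3 = (b3+2-a3) mod 3" "3 dvd a0+a1+a2+a3+a4 - 2*C - 13"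
    "(b0+b1+b2+b3+b4+C) mod 3 = 0"
  shows "3 dvd r4 - (b4+2)"
proof -
  obtain q0 where "d0 = b0+2-a0 - 3*q0" using assms(2) by (metis minus_div_mult_eq_mod mult.commute)
  moreover obtain q1 where "d1 = b1+2-a1 - 3*q1" using assms(3) by (metis minus_div_mult_eq_mod mult.commute)
  moreover obtain q2 where "d2 = b2+2-a2 - 3*q2" using assms(4) by (metis minus_div_mult_eq_mod mult.commute)
  moreover obtain q3 where "d3 = b3+2-a3 - 3*q3" using assms(5) by (metis minus_div_mult_eq_mod mult.commute)
  moreover obtain s where "a0+a1+a2+a3+a4 - 2*C - 13 = 3*s" using assms(6) by blast
  moreover obtain t where "b0+b1+b2+b3+b4+C = 3*t" using assms(7) by (metis dvd_def mod_0_imp_dvd)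
  ultimately have "r4 - (b4+2) = 3*C + 3 + 3*s - 3*t + 3*q0+3*q1+3*q2+3*q3" using assms(1) by linarith
  also have "\<dots> = 3*(C + 1 + s - t + q0+q1+q2+q3)" by (simp add: algebra_simps)
  finally show ?thesis by (metis dvd_triv_left)
qed
lemma mod3d: "3 dvd ((x::int) mod 3 - x)" by (metis mod_mod_trivial mod_eq_dvd_iff)

lemma base:
  fixes xs ys :: "nat \<Rightarrow> 'a"
  assumes ix: "inj_on xs {..<5}" and iy: "inj_on ys {..<13}" and dis: "\<And>i j. i < 5 \<Longrightarrow> j < 13 \<Longrightarrow> xs i \<noteq> ys j"
  shows "in_S3 (xs ` {..<5} \<union> ys ` {..<13})
           (\<lambda>u v. \<exists>i<5. \<exists>j<13. (u = xs i \<and> v = ys j) \<or> (u = ys j \<and> v = xs i))"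
  unfolding in_S3_def
proof (intro allI impI)
  fix \<beta> :: "'a \<Rightarrow> int"
  let ?W = "xs ` {..<5} \<union> ys ` {..<13}"
  assume sum: "(\<Sum>v\<in>?W. \<beta> v) mod 3 = 0"
  define b where "b i = \<beta> (xs i)" for i
  define c where "c j = \<beta> (ys j)" for j
  define kk where "kk j = nat ((2 * c j) mod 3) + 1" for j
  define col where "col j = (j - 5) div 2" for j :: nat
  define slot where "slot j = (j - 5) mod 2" for j :: nat
  define bs where "bs j = (if j < 5 then cyc j (kk j) else fb (col j) (kk j))" for j
  define r0 where "r0 i = (\<Sum>j<13. if i \<in> bs j then 1 else 0 :: int)" for i
  define \<delta> where "\<delta> i = ((b i + 2) - r0 i) mod 3" for i
  define sw where "sw j = (5 \<le> j \<and> int (slot j) < \<delta> (col j))" for j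
  define sel where "sel j = (if sw j then insert (col j) (bs j - {4}) else bs j)" for j
  have kk3: "kk j \<in> {1,2,3}" for j
  proof -
    have "(2 * c j) mod 3 \<in> {0,1,2}" by auto
    then show ?thesis unfolding kk_def by auto
  qed
  have col4: "5 \<le> j \<Longrightarrow> j < 13 \<Longrightarrow> col j < 4" for j unfolding col_def by auto
  have sel_props: "sel j \<subseteq> {..<5} \<and> card (sel j) = kk j" if "j < 13" for j
  proof (cases "j < 5")
    case True
    then show ?thesis using cyc_props[OF True kk3] unfolding sel_def sw_def bs_def by auto
  next
    case False
    then show ?thesis using fb_props[OF col4 kk3, of j] that unfolding sel_def bs_def by auto
  qed
  have bs_props: "bs j \<subseteq> {..<5} \<and> card (bs j) = kk j" if "j < 13" for j
  proof (cases "j < 5")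
    case True
    then show ?thesis using cyc_props[OF True kk3] unfolding bs_def by auto
  next
    case False
    then show ?thesis using fb_props[OF col4 kk3, of j] that unfolding bs_def by auto
  qed
  have cyc_sel: "j \<notin> sel j \<and> (j+1) mod 5 \<in> sel j" if "j < 5" for j
    using cyc_props[OF that kk3] that unfolding sel_def sw_def bs_def by auto
  have ind_sel: "(if i \<in> sel j then 1 else 0 :: int) = (if i \<in> bs j then 1 else 0)
      + (if sw j \<and> i = col j then 1 else 0) - (if sw j \<and> i = 4 then 1 else 0)" if "j < 13" for i j
  proof (cases "sw j")
    case True
    then have j5: "5 \<le> j" "\<not> j < 5" unfolding sw_def by auto
    have "4 \<in> bs j" "col j \<notin> bs j" "col j \<noteq> 4"
      using fb_props[OF col4[OF j5(1) that] kk3] j5 col4[OF j5(1) that] unfolding bs_def by auto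
    then show ?thesis using True unfolding sel_def by auto
  next
    case False
    then show ?thesis unfolding sel_def by auto
  qed
  have drng: "0 \<le> \<delta> i \<and> \<delta> i < 3" for i unfolding \<delta>_def by auto
  have two: "(if 0 < d then 1 else 0) + (if 1 < d then 1 else 0) = d" if "0 \<le> d" "d < (3::int)" for d
    using that by auto
  have sum13: "(\<Sum>j<(13::nat). f j) = f 0 + f 1 + f 2 + f 3 + f 4 + f 5 + f 6 + f 7 + f 8 + f 9 + f 10 + f 11 + (f 12 :: int)" for f
    by (simp add: eval_nat_numeral)
  have swc: "(\<Sum>j<13. if sw j \<and> i = col j then 1 else 0 :: int) = (if i < 4 then \<delta> i else 0)" if "i < 5" for i
  proof -
    have "(\<Sum>j<13. if sw j \<and> i = col j then 1 else 0 :: int) =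
       (if i = 0 then (if 0 < \<delta> 0 then 1 else 0) + (if 1 < \<delta> 0 then 1 else 0) else 0) +
       (if i = 1 then (if 0 < \<delta> 1 then 1 else 0) + (if 1 < \<delta> 1 then 1 else 0) else 0) +
       (if i = 2 then (if 0 < \<delta> 2 then 1 else 0) + (if 1 < \<delta> 2 then 1 else 0) else 0) +
       (if i = 3 then (if 0 < \<delta> 3 then 1 else 0) + (if 1 < \<delta> 3 then 1 else 0) else 0)"
      unfolding sum13 sw_def col_def slot_def by simp
    then show ?thesis using two drng lt5_cases[OF that] by auto
  qed
  have sw4: "(\<Sum>j<13. if sw j \<and> i = 4 then 1 else 0 :: int) = (if i = 4 then \<delta> 0 + \<delta> 1 + \<delta> 2 + \<delta> 3 else 0)" for i
  proof -
    have "(\<Sum>j<13. if sw j \<and> i = 4 then 1 else 0 :: int) =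
       (if i = 4 then ((if 0 < \<delta> 0 then 1 else 0) + (if 1 < \<delta> 0 then 1 else 0)) +
        ((if 0 < \<delta> 1 then 1 else 0) + (if 1 < \<delta> 1 then 1 else 0)) +
        ((if 0 < \<delta> 2 then 1 else 0) + (if 1 < \<delta> 2 then 1 else 0)) +
        ((if 0 < \<delta> 3 then 1 else 0) + (if 1 < \<delta> 3 then 1 else 0)) else 0)"
      unfolding sum13 sw_def col_def slot_def by simp
    then show ?thesis using two drng by presburger
  qed
  define r where "r i = (\<Sum>j<13. if i \<in> sel j then 1 else 0 :: int)" for i
  have r_eq: "r i = r0 i + (if i < 4 then \<delta> i else 0) - (if i = 4 then \<delta> 0 + \<delta> 1 + \<delta> 2 + \<delta> 3 else 0)"
    if "i < 5" for i
  proof -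
    have "r i = (\<Sum>j<13. (if i \<in> bs j then 1 else 0) + (if sw j \<and> i = col j then 1 else 0) - (if sw j \<and> i = 4 then 1 else 0 :: int))"
      unfolding r_def using ind_sel by (intro sum.cong) auto
    also have "\<dots> = r0 i + (\<Sum>j<13. if sw j \<and> i = col j then 1 else 0 :: int) - (\<Sum>j<13. if sw j \<and> i = 4 then 1 else 0 :: int)"
      unfolding r0_def by (simp add: sum.distrib sum_subtractf)
    finally show ?thesis using swc[OF that] sw4[of i] by simp
  qed
  have sum5: "(\<Sum>j<(5::nat). f j) = f 0 + f 1 + f 2 + f 3 + (f 4 :: int)" for f
    by (simp add: eval_nat_numeral)
  have Ksum: "(\<Sum>i<5. r0 i) = (\<Sum>j<13. int (kk j))"
  proof -
    have "(\<Sum>i<5. r0 i) = (\<Sum>j<13. \<Sum>i<5. if i \<in> bs j then 1 else 0 :: int)"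
      unfolding r0_def by (rule sum.swap)
    also have "\<dots> = (\<Sum>j<13. int (kk j))"
    proof (rule sum.cong)
      fix j assume "j \<in> {..<(13::nat)}"
      then have j: "j < 13" by simp
      have "{i\<in>{..<5}. i \<in> bs j} = bs j" using bs_props[OF j] by auto
      then show "(\<Sum>i<5. if i \<in> bs j then 1 else 0 :: int) = int (kk j)"
        using card_ind[of "{..<5::nat}" "\<lambda>i. i \<in> bs j"] bs_props[OF j] by simp
    qed simp
    finally show ?thesis .
  qed
  have kkc: "3 dvd ((\<Sum>j<13. int (kk j)) - 2 * (\<Sum>j<13. c j) - 13)"
  proof -
    have "(\<Sum>j<13. int (kk j)) - 2 * (\<Sum>j<13. c j) - 13 = (\<Sum>j<13::nat. int (kk j) - 2 * c j - 1)"
      by (simp add: sum_subtractf sum_distrib_left)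
    moreover have "3 dvd (\<Sum>j<13::nat. int (kk j) - 2 * c j - 1)"
    proof (rule dvd_sum)
      fix j
      have "int (kk j) = (2 * c j) mod 3 + 1" unfolding kk_def by simp
      then show "3 dvd int (kk j) - 2 * c j - 1" by (simp add: mod_eq_dvd_iff[symmetric])
    qed
    ultimately show ?thesis by simp
  qed
  have sumW: "(\<Sum>v\<in>?W. \<beta> v) = (\<Sum>i<5. b i) + (\<Sum>j<13. c j)"
  proof -
    have "xs ` {..<5} \<inter> ys ` {..<13} = {}" using dis by auto
    then have "(\<Sum>v\<in>?W. \<beta> v) = (\<Sum>v\<in>xs ` {..<5}. \<beta> v) + (\<Sum>v\<in>ys ` {..<13}. \<beta> v)"
      by (simp add: sum.union_disjoint)
    also have "\<dots> = (\<Sum>i<5. b i) + (\<Sum>j<13. c j)"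
      using ix iy unfolding b_def c_def by (simp add: sum.reindex)
    finally show ?thesis .
  qed
  have rmod: "3 dvd (r i - (b i + 2))" if "i < 5" for i
  proof (cases "i < 4")
    case True
    then have "r i - (b i + 2) = (b i + 2 - r0 i) mod 3 - (b i + 2 - r0 i)"
      using r_eq[OF that] unfolding \<delta>_def by simp
    then show ?thesis using mod3d by metis
  next
    case False
    then have i4: "i = 4" using that by simp
    have "r 4 = r0 4 - (\<delta> 0 + \<delta> 1 + \<delta> 2 + \<delta> 3)" using r_eq[of 4] by simp
    moreover have "\<delta> 0 = ((b 0 + 2) - r0 0) mod 3" "\<delta> 1 = ((b 1 + 2) - r0 1) mod 3"
      "\<delta> 2 = ((b 2 + 2) - r0 2) mod 3" "\<delta> 3 = ((b 3 + 2) - r0 3) mod 3" unfolding \<delta>_def by auto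
    moreover have "3 dvd (r0 0 + r0 1 + r0 2 + r0 3 + r0 4 - 2 * (\<Sum>j<13. c j) - 13)"
      using kkc Ksum sum5[of r0] by simp
    moreover have "(b 0 + b 1 + b 2 + b 3 + b 4 + (\<Sum>j<13. c j)) mod 3 = 0"
      using sum sumW sum5[of b] by simp
    ultimately show ?thesis unfolding i4 by (rule arith4)
  qed
  define D where "D u v \<longleftrightarrow> (\<exists>i<5. \<exists>j<13. u = xs i \<and> v = ys j \<and> i \<notin> sel j) \<or>
     (\<exists>i<5. \<exists>j<13. u = ys j \<and> v = xs i \<and> i \<in> sel j)" for u v
  have ixs: "i < 5 \<Longrightarrow> i' < 5 \<Longrightarrow> xs i = xs i' \<Longrightarrow> i = i'" for i i' using ix by (auto dest: inj_onD)
  have iys: "j < 13 \<Longrightarrow> j' < 13 \<Longrightarrow> ys j = ys j' \<Longrightarrow> j = j'" for j j' using iy by (auto dest: inj_onD)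
  have dis': "i < 5 \<Longrightarrow> j < 13 \<Longrightarrow> ys j \<noteq> xs i" for i j using dis by metis
  have Dxy: "i < 5 \<Longrightarrow> j < 13 \<Longrightarrow> D (xs i) (ys j) \<longleftrightarrow> i \<notin> sel j" for i j
    unfolding D_def using ixs iys dis dis' by metis
  have Dyx: "i < 5 \<Longrightarrow> j < 13 \<Longrightarrow> D (ys j) (xs i) \<longleftrightarrow> i \<in> sel j" for i j
    unfolding D_def using ixs iys dis dis' by metis
  have Dxx: "i < 5 \<Longrightarrow> i' < 5 \<Longrightarrow> \<not> D (xs i) (xs i')" for i i'
    unfolding D_def using dis dis' by metis
  have Dyy: "j < 13 \<Longrightarrow> j' < 13 \<Longrightarrow> \<not> D (ys j) (ys j')" for j j'
    unfolding D_def using dis dis' by metis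
  have orient: "orientation (\<lambda>u v. \<exists>i<5. \<exists>j<13. (u = xs i \<and> v = ys j) \<or> (u = ys j \<and> v = xs i)) D"
    unfolding orientation_def
  proof (intro conjI allI impI)
    fix u v assume "D u v" then show "\<exists>i<5. \<exists>j<13. (u = xs i \<and> v = ys j) \<or> (u = ys j \<and> v = xs i)"
      unfolding D_def by blast
  next
    fix u v assume "\<exists>i<5. \<exists>j<13. (u = xs i \<and> v = ys j) \<or> (u = ys j \<and> v = xs i)"
    then obtain i j where ij: "i < 5" "j < 13" "(u = xs i \<and> v = ys j) \<or> (u = ys j \<and> v = xs i)" by blast
    then show "D u v \<noteq> D v u" using Dxy[OF ij(1,2)] Dyx[OF ij(1,2)] by auto
  qed
  let ?R = "{(u,v). D u v}"
  have st: "(xs i, xs j) \<in> ?R\<^sup>*" if "i < 5" "j = (i+1) mod 5" for i j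
  proof -
    have "(xs i, ys i) \<in> ?R" using Dxy[OF that(1)] cyc_sel[OF that(1)] that by auto
    moreover have "(ys i, xs j) \<in> ?R" using Dyx[of j i] cyc_sel[OF that(1)] that by auto
    ultimately show ?thesis by (meson r_into_rtrancl rtrancl_trans)
  qed
  have st0: "(xs 0, xs 1) \<in> ?R\<^sup>*" "(xs 1, xs 2) \<in> ?R\<^sup>*" "(xs 2, xs 3) \<in> ?R\<^sup>*"
     "(xs 3, xs 4) \<in> ?R\<^sup>*" "(xs 4, xs 0) \<in> ?R\<^sup>*"
    by (rule st; simp)+
  have xconn: "(xs i, xs 0) \<in> ?R\<^sup>* \<and> (xs 0, xs i) \<in> ?R\<^sup>*" if "i < 5" for i
  proof -
    have a2: "(xs 0, xs 2) \<in> ?R\<^sup>*" using st0(1,2) by (rule rtrancl_trans)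
    have a3: "(xs 0, xs 3) \<in> ?R\<^sup>*" using a2 st0(3) by (rule rtrancl_trans)
    have a4: "(xs 0, xs 4) \<in> ?R\<^sup>*" using a3 st0(4) by (rule rtrancl_trans)
    have b3: "(xs 3, xs 0) \<in> ?R\<^sup>*" using st0(4,5) by (rule rtrancl_trans)
    have b2: "(xs 2, xs 0) \<in> ?R\<^sup>*" using st0(3) b3 by (rule rtrancl_trans)
    have b1: "(xs 1, xs 0) \<in> ?R\<^sup>*" using st0(2) b2 by (rule rtrancl_trans)
    show ?thesis using lt5_cases[OF that] a2 a3 a4 b3 b2 b1 st0(1,5) by auto
  qed
  have conn: "(u, xs 0) \<in> ?R\<^sup>* \<and> (xs 0, u) \<in> ?R\<^sup>*" if uW: "u \<in> ?W" for u
  proof (cases "u \<in> xs ` {..<5}")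
    case True then show ?thesis using xconn by auto
  next
    case False
    then obtain j where j: "j < 13" "u = ys j" using uW by auto
    have "sel j \<noteq> {}" using sel_props[OF j(1)] kk3[of j] by auto
    then obtain i where i: "i \<in> sel j" by auto
    have "sel j \<noteq> {..<5}" using sel_props[OF j(1)] kk3[of j] by auto
    then obtain i' where i': "i' < 5" "i' \<notin> sel j" using sel_props[OF j(1)] by auto
    have i5: "i < 5" using i sel_props[OF j(1)] by auto
    have "(u, xs i) \<in> ?R" using Dyx[OF i5 j(1)] i j by auto
    moreover have "(xs i', u) \<in> ?R" using Dxy[OF i'(1) j(1)] i' j by auto
    ultimately show ?thesis using xconn[OF i5] xconn[OF i'(1)]
      by (metis converse_rtrancl_into_rtrancl rtrancl.rtrancl_into_rtrancl)
  qed
  have sconn: "strongly_connected ?W D" unfolding strongly_connected_def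
  proof (intro ballI)
    fix u v assume "u \<in> ?W" "v \<in> ?W"
    then have "(u, xs 0) \<in> ?R\<^sup>*" "(xs 0, v) \<in> ?R\<^sup>*" using conn by auto
    then show "(u, v) \<in> ?R\<^sup>*" by (rule rtrancl_trans)
  qed
  have degs: "\<forall>v\<in>?W. (int (out_degree ?W D v) - int (in_degree ?W D v)) mod 3 = \<beta> v mod 3"
  proof
    fix v assume v: "v \<in> ?W"
    show "(int (out_degree ?W D v) - int (in_degree ?W D v)) mod 3 = \<beta> v mod 3"
    proof (cases "v \<in> xs ` {..<5}")
      case True
      then obtain i where i: "i < 5" "v = xs i" by auto
      have "{w\<in>?W. D v w} = ys ` {j\<in>{..<13}. i \<notin> sel j}"
        using Dxy[OF i(1)] Dxx[OF i(1)] i by auto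
      moreover have "card (ys ` {j\<in>{..<13}. i \<notin> sel j}) = card {j\<in>{..<13}. i \<notin> sel j}"
        by (rule card_image, rule inj_on_subset[OF iy]) auto
      ultimately have o: "out_degree ?W D v = card {j\<in>{..<13}. i \<notin> sel j}"
        unfolding out_degree_def by simp
      have "{w\<in>?W. D w v} = ys ` {j\<in>{..<13}. i \<in> sel j}"
        using Dyx[OF i(1)] Dxx[OF _ i(1)] i by auto
      moreover have "card (ys ` {j\<in>{..<13}. i \<in> sel j}) = card {j\<in>{..<13}. i \<in> sel j}"
        by (rule card_image, rule inj_on_subset[OF iy]) auto
      ultimately have n: "in_degree ?W D v = card {j\<in>{..<13}. i \<in> sel j}"
        unfolding in_degree_def by simp
      have rn: "int (in_degree ?W D v) = r i" unfolding n r_def using card_ind[of "{..<13::nat}" "\<lambda>j. i \<in> sel j"] by simp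
      have u: "{..<13::nat} = {j\<in>{..<13}. i \<notin> sel j} \<union> {j\<in>{..<13}. i \<in> sel j}" by auto
      have "card {..<13::nat} = card {j\<in>{..<13}. i \<notin> sel j} + card {j\<in>{..<13}. i \<in> sel j}"
        by (subst u, rule card_Un_disjoint) auto
      then have "out_degree ?W D v + in_degree ?W D v = 13" using o n by simp
      then have "int (out_degree ?W D v) = 13 - r i" using rn by linarith
      moreover obtain q where "r i - (b i + 2) = 3 * q" using rmod[OF i(1)] by blast
      ultimately have "int (out_degree ?W D v) - int (in_degree ?W D v) - \<beta> v = 3 * (3 - b i - 2 * q)"
        using rn i(2) unfolding b_def by simp
      then show ?thesis by (simp add: mod_eq_dvd_iff)
    next
      case False
      then obtain j where j: "j < 13" "v = ys j" using v by auto
      have "{w\<in>?W. D v w} = xs ` sel j"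
        using Dyx[OF _ j(1)] Dyy[OF j(1)] j sel_props[OF j(1)] by auto
      moreover have "card (xs ` sel j) = card (sel j)"
        by (rule card_image, rule inj_on_subset[OF ix]) (use sel_props[OF j(1)] in auto)
      ultimately have o: "out_degree ?W D v = kk j"
        unfolding out_degree_def using sel_props[OF j(1)] by simp
      have "{w\<in>?W. D w v} = xs ` ({..<5} - sel j)"
        using Dxy[OF _ j(1)] Dyy[OF _ j(1)] j by auto
      moreover have "card (xs ` ({..<5} - sel j)) = card ({..<5} - sel j)"
        by (rule card_image, rule inj_on_subset[OF ix]) auto
      moreover have "card ({..<5::nat} - sel j) = 5 - kk j"
        using sel_props[OF j(1)] card_Diff_subset[of "sel j" "{..<5::nat}"] finite_subset by fastforce
      ultimately have n: "in_degree ?W D v = 5 - kk j"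
        unfolding in_degree_def by simp
      have k3: "kk j \<le> 3" using kk3[of j] by auto
      have ik: "int (kk j) = (2 * c j) mod 3 + 1" unfolding kk_def by simp
      obtain q where q: "(2 * c j) mod 3 - 2 * c j = 3 * q" using mod3d by blast
      have "int (out_degree ?W D v) - int (in_degree ?W D v) - \<beta> v = 3 * (2 * q + c j - 1)"
        using o n k3 ik q j unfolding c_def by (simp add: of_nat_diff)
      then show ?thesis by (simp add: mod_eq_dvd_iff)
    qed
  qed
  show "\<exists>D. orientation (\<lambda>u v. \<exists>i<5. \<exists>j<13. (u = xs i \<and> v = ys j) \<or> (u = ys j \<and> v = xs i)) D \<and>
        strongly_connected ?W D \<and> (\<forall>v\<in>?W. (int (out_degree ?W D v) - int (in_degree ?W D v)) mod 3 = \<beta> v mod 3)"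
    using orient sconn degs by blast
qed


lemma grow_set:
  assumes fin: "finite W" and sym: "\<forall>u v. Ec u v \<longrightarrow> Ec v u" and irr: "\<forall>u. \<not> Ec u u"
    and S: "in_S3 W (Er W Ec)"
  shows "finite T \<Longrightarrow> T \<inter> W = {} \<Longrightarrow> \<forall>t\<in>T. card {w\<in>W. Ec t w} \<ge> 4 \<Longrightarrow> in_S3 (W \<union> T) (Er (W \<union> T) Ec)"
proof (induction T rule: finite_induct)
  case empty
  then show ?case using S by simp
next
  case (insert t F)
  then have IH: "in_S3 (W \<union> F) (Er (W \<union> F) Ec)" by auto
  have "card {w\<in>W. Ec t w} \<le> card {w\<in>W \<union> F. Ec t w}"
    by (rule card_mono) (use fin insert in auto)
  then have "card {w\<in>W \<union> F. Ec t w} \<ge> 4" using insert by auto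
  moreover have "t \<notin> W \<union> F" using insert by auto
  ultimately have "in_S3 (insert t (W \<union> F)) (Er (insert t (W \<union> F)) Ec)"
    using grow[OF _ sym irr IH] fin insert by auto
  then show ?case by simp
qed

lemma cut_fin: "finite V \<Longrightarrow> S \<subseteq> V \<Longrightarrow> finite (cut_edges V E S)"
  unfolding cut_edges_def by (rule finite_subset[of _ "V \<times> V"]) auto

lemma row_le:
  assumes fin: "finite V" and "s \<in> S" and "S \<subseteq> V"
  shows "card {b\<in>V - S. E s b} \<le> card (cut_edges V E S)"
proof -
  have "Pair s ` {b\<in>V - S. E s b} \<subseteq> cut_edges V E S" using assms unfolding cut_edges_def by auto
  then have "card (Pair s ` {b\<in>V - S. E s b}) \<le> card (cut_edges V E S)"
    using cut_fin[OF fin assms(3)] card_mono by blast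
  moreover have "card (Pair s ` {b\<in>V - S. E s b}) = card {b\<in>V - S. E s b}"
    by (rule card_image) (auto simp: inj_on_def)
  ultimately show ?thesis by simp
qed

lemma col_le:
  assumes fin: "finite V" and "u \<in> V - S" and "S \<subseteq> V"
  shows "card {s\<in>S. E s u} \<le> card (cut_edges V E S)"
proof -
  have "(\<lambda>s. (s, u)) ` {s\<in>S. E s u} \<subseteq> cut_edges V E S" using assms unfolding cut_edges_def by auto
  then have "card ((\<lambda>s. (s, u)) ` {s\<in>S. E s u}) \<le> card (cut_edges V E S)"
    using cut_fin[OF fin assms(3)] card_mono by blast
  moreover have "card ((\<lambda>s. (s, u)) ` {s\<in>S. E s u}) = card {s\<in>S. E s u}"
    by (rule card_image) (auto simp: inj_on_def)
  ultimately show ?thesis by simp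
qed

lemma two_cols:
  assumes fin: "finite V" and "u1 \<in> V - S" "u2 \<in> V - S" "u1 \<noteq> u2" and "S \<subseteq> V"
  shows "card {s\<in>S. E s u1} + card {s\<in>S. E s u2} \<le> card (cut_edges V E S)"
proof -
  let ?P1 = "(\<lambda>s. (s, u1)) ` {s\<in>S. E s u1}" and ?P2 = "(\<lambda>s. (s, u2)) ` {s\<in>S. E s u2}"
  have "?P1 \<union> ?P2 \<subseteq> cut_edges V E S" using assms unfolding cut_edges_def by auto
  then have "card (?P1 \<union> ?P2) \<le> card (cut_edges V E S)"
    using cut_fin[OF fin assms(5)] card_mono by blast
  moreover have "card (?P1 \<union> ?P2) = card ?P1 + card ?P2"
  proof (rule card_Un_disjoint)
    have "finite S" using fin assms(5) finite_subset by blast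
    then show "finite ?P1" "finite ?P2" by auto
    show "?P1 \<inter> ?P2 = {}" using assms(4) by auto
  qed
  moreover have "card ?P1 = card {s\<in>S. E s u1}" by (rule card_image) (auto simp: inj_on_def)
  moreover have "card ?P2 = card {s\<in>S. E s u2}" by (rule card_image) (auto simp: inj_on_def)
  ultimately show ?thesis by simp
qed

lemma finish:
  assumes sg: "simple_graph V E" and degc: "\<forall>v\<in>V. degree V (compl_graph V E) v \<ge> 4"
    and SV: "S \<subseteq> V" and cut: "card (cut_edges V E S) \<le> 3" and S5: "card S \<ge> 5"
    and AS: "A \<subseteq> S" and BT: "B \<subseteq> V - S" and cA: "card A = 5" and cB: "card B = 13"
    and nE: "\<forall>a\<in>A. \<forall>b\<in>B. \<not> E a b"
  shows "in_S3 V (compl_graph V E)"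
proof -
  define Ec where "Ec = compl_graph V E"
  have fin: "finite V" and Esym: "\<And>u v. E u v \<Longrightarrow> E v u" and EV: "\<And>u v. E u v \<Longrightarrow> u \<in> V \<and> v \<in> V \<and> u \<noteq> v"
    using sg unfolding simple_graph_def by auto
  have Ecsym: "\<forall>u v. Ec u v \<longrightarrow> Ec v u" using Esym unfolding Ec_def compl_graph_def by auto
  have Ecirr: "\<forall>u. \<not> Ec u u" unfolding Ec_def compl_graph_def by auto
  have EcV: "\<And>u v. Ec u v \<Longrightarrow> u \<in> V \<and> v \<in> V \<and> u \<noteq> v" unfolding Ec_def compl_graph_def by auto
  have Ec_iff: "u \<in> V \<Longrightarrow> v \<in> V \<Longrightarrow> u \<noteq> v \<Longrightarrow> Ec u v \<longleftrightarrow> \<not> E u v" for u v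
    unfolding Ec_def compl_graph_def by auto
  have finA: "finite A" using fin AS SV by (meson finite_subset)
  have finB: "finite B" using fin BT by (meson Diff_subset finite_subset subset_trans)
  obtain xs where xs: "bij_betw xs {0..<card A} A" using ex_bij_betw_nat_finite[OF finA] by blast
  obtain ys where ys: "bij_betw ys {0..<card B} B" using ex_bij_betw_nat_finite[OF finB] by blast
  have xsA: "xs ` {..<5} = A" and ix: "inj_on xs {..<5}" using xs cA unfolding bij_betw_def
    by (auto simp: atLeast0LessThan)
  have ysB: "ys ` {..<13} = B" and iy: "inj_on ys {..<13}" using ys cB unfolding bij_betw_def
    by (auto simp: atLeast0LessThan)
  have ABd: "A \<inter> B = {}" using AS BT by auto
  have dis: "i < 5 \<Longrightarrow> j < 13 \<Longrightarrow> xs i \<noteq> ys j" for i j using xsA ysB ABd by auto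
  define W0 where "W0 = A \<union> B"
  have W0V: "W0 \<subseteq> V" using AS BT SV unfolding W0_def by auto
  have finW0: "finite W0" using W0V fin by (meson finite_subset)
  have S0: "in_S3 W0 (Er W0 Ec)"
  proof (rule mono_S3)
    show "finite W0" by (rule finW0)
    show "in_S3 W0 (\<lambda>u v. \<exists>i<5. \<exists>j<13. (u = xs i \<and> v = ys j) \<or> (u = ys j \<and> v = xs i))"
      using base[OF ix iy dis] xsA ysB unfolding W0_def by simp
    show "\<forall>u v. Er W0 Ec u v \<longrightarrow> u \<in> W0 \<and> v \<in> W0 \<and> u \<noteq> v \<and> Er W0 Ec v u"
      using Ecsym EcV unfolding Er_def by blast
    show "\<forall>u v. (\<exists>i<5. \<exists>j<13. (u = xs i \<and> v = ys j) \<or> (u = ys j \<and> v = xs i)) \<longrightarrow>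
                (\<exists>i<5. \<exists>j<13. (v = xs i \<and> u = ys j) \<or> (v = ys j \<and> u = xs i))" by blast
    show "\<forall>u v. (\<exists>i<5. \<exists>j<13. (u = xs i \<and> v = ys j) \<or> (u = ys j \<and> v = xs i)) \<longrightarrow> Er W0 Ec u v"
    proof (intro allI impI)
      fix u v assume "\<exists>i<5. \<exists>j<13. (u = xs i \<and> v = ys j) \<or> (u = ys j \<and> v = xs i)"
      then obtain a b where ab: "a \<in> A" "b \<in> B" "(u = a \<and> v = b) \<or> (u = b \<and> v = a)"
        using xsA ysB by blast
      have "a \<in> V" "b \<in> V" "a \<noteq> b" using ab AS BT SV by auto
      moreover have "\<not> E a b" "\<not> E b a" using nE ab Esym by auto
      ultimately show "Er W0 Ec u v" using ab Ec_iff unfolding Er_def W0_def by auto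
    qed
  qed
  define T1 where "T1 = {v\<in>V - W0. card {w\<in>W0. Ec v w} \<ge> 4}"
  define W1 where "W1 = W0 \<union> T1"
  have S1: "in_S3 W1 (Er W1 Ec)" unfolding W1_def
    by (rule grow_set[OF finW0 Ecsym Ecirr S0]) (use fin in \<open>auto simp: T1_def\<close>)
  have SW1: "S \<subseteq> W1"
  proof
    fix s assume s: "s \<in> S"
    show "s \<in> W1"
    proof (cases "s \<in> W0")
      case True then show ?thesis unfolding W1_def by auto
    next
      case False
      have "B - {b\<in>V - S. E s b} \<subseteq> {w\<in>W0. Ec s w}"
        using BT s SV Ec_iff unfolding W0_def by auto
      moreover have "card {b\<in>V - S. E s b} \<le> 3" using row_le[OF fin s SV, of E] cut by simp
      moreover have "card (B - {b\<in>V - S. E s b}) \<ge> card B - card {b\<in>V - S. E s b}"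
        by (rule diff_card_le_card_Diff) (use fin in auto)
      ultimately have "card {w\<in>W0. Ec s w} \<ge> 4"
        using cB card_mono[of "{w\<in>W0. Ec s w}" "B - {b\<in>V - S. E s b}"] finW0 by auto
      then show ?thesis using False s SV unfolding W1_def T1_def by auto
    qed
  qed
  have W1V: "W1 \<subseteq> V" using W0V unfolding W1_def T1_def by auto
  have finW1: "finite W1" using W1V fin by (meson finite_subset)
  define T2 where "T2 = {v\<in>V - W1. card {w\<in>W1. Ec v w} \<ge> 4}"
  define W2 where "W2 = W1 \<union> T2"
  have S2: "in_S3 W2 (Er W2 Ec)" unfolding W2_def
    by (rule grow_set[OF finW1 Ecsym Ecirr S1]) (use fin in \<open>auto simp: T2_def\<close>)
  have W2V: "W2 \<subseteq> V" using W1V unfolding W2_def T2_def by auto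
  have finW2: "finite W2" using W2V fin by (meson finite_subset)
  have big: "card {s\<in>S. E s u} \<ge> 2" if u: "u \<in> V - W2" for u
  proof -
    have uS: "u \<in> V - S" using u SW1 unfolding W2_def by auto
    have "card {w\<in>W1. Ec u w} < 4" using u unfolding W2_def T2_def by auto
    moreover have "{s\<in>S. Ec u s} \<subseteq> {w\<in>W1. Ec u w}" using SW1 by auto
    ultimately have c1: "card {s\<in>S. Ec u s} \<le> 3"
      using card_mono[OF _ \<open>{s\<in>S. Ec u s} \<subseteq> {w\<in>W1. Ec u w}\<close>] finW1 by fastforce
    have "S \<subseteq> {s\<in>S. Ec u s} \<union> {s\<in>S. E s u}"
    proof
      fix s assume s: "s \<in> S"
      then have "s \<in> V" "s \<noteq> u" using SV uS by auto
      then show "s \<in> {s\<in>S. Ec u s} \<union> {s\<in>S. E s u}" using Ec_iff[of u s] Esym[of u s] s uS by auto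
    qed
    then have "card S \<le> card ({s\<in>S. Ec u s} \<union> {s\<in>S. E s u})"
    proof (rule card_mono[rotated])
      have "finite S" using fin SV by (meson finite_subset)
      then show "finite ({s\<in>S. Ec u s} \<union> {s\<in>S. E s u})" by auto
    qed
    also have "\<dots> \<le> card {s\<in>S. Ec u s} + card {s\<in>S. E s u}" by (rule card_Un_le)
    finally show ?thesis using c1 S5 by linarith
  qed
  have uniq: "u1 = u2" if "u1 \<in> V - W2" "u2 \<in> V - W2" for u1 u2
  proof (rule ccontr)
    assume ne: "u1 \<noteq> u2"
    have "u1 \<in> V - S" "u2 \<in> V - S" using that SW1 unfolding W2_def by auto
    from two_cols[OF fin this ne SV, of E] big[OF that(1)] big[OF that(2)] cut show False by linarith
  qed
  define T3 where "T3 = V - W2"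
  have S3: "in_S3 (W2 \<union> T3) (Er (W2 \<union> T3) Ec)"
  proof (rule grow_set[OF finW2 Ecsym Ecirr S2])
    show "finite T3" using fin unfolding T3_def by auto
    show "T3 \<inter> W2 = {}" unfolding T3_def by auto
    show "\<forall>t\<in>T3. 4 \<le> card {w \<in> W2. Ec t w}"
    proof
      fix t assume t: "t \<in> T3"
      have "{w\<in>W2. Ec t w} = {w\<in>V. Ec t w}"
        using uniq t EcV unfolding T3_def by blast
      then show "4 \<le> card {w \<in> W2. Ec t w}" using degc t unfolding T3_def degree_def Ec_def by auto
    qed
  qed
  have "W2 \<union> T3 = V" using W2V unfolding T3_def by auto
  moreover have "Er V Ec = Ec" using EcV unfolding Er_def by (auto intro!: ext)
  ultimately show ?thesis using S3 unfolding Ec_def by simp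
qed



lemma side5:
  assumes fin: "finite V" and Esym: "\<And>u v. E u v \<Longrightarrow> E v u" and EV: "\<And>u v. E u v \<Longrightarrow> u \<in> V \<and> v \<in> V \<and> u \<noteq> v"
    and deg: "\<forall>v\<in>V. degree V E v \<ge> 4"
    and X: "X \<noteq> {}" "X \<subseteq> V" and cut: "card (cut_edges V E X) \<le> 3"
  shows "card X \<ge> 5"
proof (rule ccontr)
  assume "\<not> card X \<ge> 5"
  then have c4: "card X \<le> 4" by simp
  have finX: "finite X" using fin X(2) by (meson finite_subset)
  have c1: "card X \<ge> 1" using X(1) finX by (simp add: Suc_leI card_gt_0_iff)
  have each: "card {w\<in>V - X. E x w} \<ge> 5 - card X" if x: "x \<in> X" for x
  proof -
    have "{w\<in>V. E x w} \<subseteq> (X - {x}) \<union> {w\<in>V - X. E x w}" using EV by auto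
    then have "card {w\<in>V. E x w} \<le> card ((X - {x}) \<union> {w\<in>V - X. E x w})"
      by (rule card_mono[rotated]) (use fin finX in auto)
    also have "\<dots> \<le> card (X - {x}) + card {w\<in>V - X. E x w}" by (rule card_Un_le)
    also have "card (X - {x}) = card X - 1" using x finX by simp
    finally have "card {w\<in>V. E x w} \<le> card X - 1 + card {w\<in>V - X. E x w}" .
    moreover have "card {w\<in>V. E x w} \<ge> 4" using deg x X(2) unfolding degree_def by auto
    ultimately show ?thesis using c1 by linarith
  qed
  have "cut_edges V E X = Sigma X (\<lambda>x. {w\<in>V - X. E x w})" unfolding cut_edges_def by auto
  then have "card (cut_edges V E X) = (\<Sum>x\<in>X. card {w\<in>V - X. E x w})"
    using finX fin by (simp add: card_SigmaI)
  also have "\<dots> \<ge> (\<Sum>x\<in>X. 5 - card X)" by (rule sum_mono) (use each in auto)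
  finally have "card (cut_edges V E X) \<ge> card X * (5 - card X)" by simp
  moreover have "card X * (5 - card X) \<ge> 4"
  proof -
    have "card X = 1 \<or> card X = 2 \<or> card X = 3 \<or> card X = 4" using c1 c4 by linarith
    then show ?thesis by auto
  qed
  ultimately show False using cut by linarith
qed

lemma cut_swap:
  assumes Esym: "\<And>u v. E u v \<Longrightarrow> E v u" and XV: "X \<subseteq> V"
  shows "card (cut_edges V E (V - X)) = card (cut_edges V E X)"
proof -
  have "cut_edges V E (V - X) = (\<lambda>(a,b). (b,a)) ` cut_edges V E X"
    unfolding cut_edges_def using XV Esym by (auto simp: image_iff)
  moreover have "inj_on (\<lambda>(a,b). (b,a)) (cut_edges V E X)" by (auto simp: inj_on_def)
  ultimately show ?thesis by (simp add: card_image)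
qed

theorem mainTheorem15:
  fixes V :: "'a set" and E :: "'a \<Rightarrow> 'a \<Rightarrow> bool"
  assumes "simple_graph V E"
    and "min (min_degree V E) (min_degree V (compl_graph V E)) \<ge> 4"
    and "card V \<ge> 26"
    and "has_edge_cut_at_most V E 3"
  shows "in_S3 V (compl_graph V E)"
proof -
  have fin: "finite V" and Esym: "\<And>u v. E u v \<Longrightarrow> E v u" and EV: "\<And>u v. E u v \<Longrightarrow> u \<in> V \<and> v \<in> V \<and> u \<noteq> v"
    using assms(1) unfolding simple_graph_def by auto
  have degE: "\<forall>v\<in>V. degree V E v \<ge> 4"
  proof
    fix v assume "v \<in> V"
    then have "Min (degree V E ` V) \<le> degree V E v" using fin by (simp add: Min_le)
    then show "degree V E v \<ge> 4" using assms(2) unfolding min_degree_def by linarith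
  qed
  have degc: "\<forall>v\<in>V. degree V (compl_graph V E) v \<ge> 4"
  proof
    fix v assume "v \<in> V"
    then have "Min (degree V (compl_graph V E) ` V) \<le> degree V (compl_graph V E) v" using fin by (simp add: Min_le)
    then show "degree V (compl_graph V E) v \<ge> 4" using assms(2) unfolding min_degree_def by linarith
  qed
  obtain X where X: "X \<noteq> {}" "X \<subset> V" "card (cut_edges V E X) \<le> 3"
    using assms(4) unfolding has_edge_cut_at_most_def by blast
  define Y where "Y = V - X"
  have XV: "X \<subseteq> V" using X by auto
  have Yne: "Y \<noteq> {}" "Y \<subseteq> V" using X unfolding Y_def by auto
  have cutY: "card (cut_edges V E Y) \<le> 3" using cut_swap[OF Esym XV] X(3) unfolding Y_def by simp
  have cX: "card X \<ge> 5" by (rule side5[OF fin Esym EV degE X(1) XV X(3)])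
  have cY: "card Y \<ge> 5" by (rule side5[OF fin Esym EV degE Yne cutY])
  have finX: "finite X" and finY: "finite Y" using fin XV Yne(2) by (meson finite_subset)+
  have cV: "card V = card X + card Y" unfolding Y_def using card_Diff_subset[OF finX XV] card_mono[OF fin XV] by simp
  define C where "C = cut_edges V E X"
  have finC: "finite C" unfolding C_def by (rule cut_fin[OF fin XV])
  define MX where "MX = fst ` C"
  define MY where "MY = snd ` C"
  have cMX: "card MX \<le> 3" unfolding MX_def using card_image_le[OF finC, of fst] X(3) C_def by simp
  have cMY: "card MY \<le> 3" unfolding MY_def using card_image_le[OF finC, of snd] X(3) C_def by simp
  have finMX: "finite MX" and finMY: "finite MY" unfolding MX_def MY_def using finC by auto
  have inM: "x \<in> MX \<and> y \<in> MY" if "x \<in> X" "y \<in> Y" "E x y" for x y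
  proof -
    have "(x, y) \<in> C" using that unfolding C_def cut_edges_def Y_def by auto
    then show ?thesis unfolding MX_def MY_def by force
  qed
  have dl: "card (P - M) \<ge> card P - card M" if "finite M" for P M :: "'a set"
    using diff_card_le_card_Diff[OF that] by simp
  have YX: "V - Y = X" unfolding Y_def using XV by auto
  show ?thesis
  proof (cases "card Y \<ge> 16")
    case True
    have "card (Y - MY) \<ge> 13" using dl[OF finMY, of Y] True cMY by linarith
    then obtain B where B: "B \<subseteq> Y - MY" "card B = 13" by (meson obtain_subset_with_card_n)
    obtain A where A: "A \<subseteq> X" "card A = 5" using cX by (meson obtain_subset_with_card_n)
    have nE: "\<forall>a\<in>A. \<forall>b\<in>B. \<not> E a b" using A B inM by blast
    have BT: "B \<subseteq> V - X" using B(1) unfolding Y_def by auto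
    show ?thesis by (rule finish[OF assms(1) degc XV X(3) cX A(1) BT A(2) B(2) nE])
  next
    case c1: False
    show ?thesis
    proof (cases "card X \<ge> 16")
      case True
      have "card (X - MX) \<ge> 13" using dl[OF finMX, of X] True cMX by linarith
      then obtain B where B: "B \<subseteq> X - MX" "card B = 13" by (meson obtain_subset_with_card_n)
      obtain A where A: "A \<subseteq> Y" "card A = 5" using cY by (meson obtain_subset_with_card_n)
      have nE: "\<forall>a\<in>A. \<forall>b\<in>B. \<not> E a b" using A B inM Esym by blast
      have BT: "B \<subseteq> V - Y" using B(1) YX by auto
      show ?thesis by (rule finish[OF assms(1) degc Yne(2) cutY cY A(1) BT A(2) B(2) nE])
    next
      case c2: False
      show ?thesis
      proof (cases "card Y \<ge> 13")
        case True
        have "card (X - MX) \<ge> 5" using dl[OF finMX, of X] c1 cV assms(3) cMX by linarith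
        then obtain A where A: "A \<subseteq> X - MX" "card A = 5" by (meson obtain_subset_with_card_n)
        obtain B where B: "B \<subseteq> Y" "card B = 13" using True by (meson obtain_subset_with_card_n)
        have nE: "\<forall>a\<in>A. \<forall>b\<in>B. \<not> E a b" using A B inM by blast
        have BT: "B \<subseteq> V - X" using B(1) unfolding Y_def by auto
        have AS: "A \<subseteq> X" using A(1) by auto
        show ?thesis by (rule finish[OF assms(1) degc XV X(3) cX AS BT A(2) B(2) nE])
      next
        case False
        have "card (Y - MY) \<ge> 5" using dl[OF finMY, of Y] c2 cV assms(3) cMY by linarith
        then obtain A where A: "A \<subseteq> Y - MY" "card A = 5" by (meson obtain_subset_with_card_n)
        have "card X \<ge> 13" using False cV assms(3) c2 by linarith
        then obtain B where B: "B \<subseteq> X" "card B = 13" by (meson obtain_subset_with_card_n)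
        have nE: "\<forall>a\<in>A. \<forall>b\<in>B. \<not> E a b" using A B inM Esym by blast
        have BT: "B \<subseteq> V - Y" using B(1) YX by auto
        have AS: "A \<subseteq> Y" using A(1) by auto
        show ?thesis by (rule finish[OF assms(1) degc Yne(2) cutY cY AS BT A(2) B(2) nE])
      qed
    qed
  qed
qed

end
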